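(* Let $\varepsilon\in(0,1)$ and let $\tau,\alpha,f_0,g$ be as defined in the context. For every $x\in\{0,1\}^n$ with $f(x)\ge f_0$, \[E[g(\mathcal{M}(x))]\le\frac{1}{e}(1+\varepsilon)\,g(x).\]
   Context: $f$ is OneMax, $f(x)=\sum_i x_i$. $\mathcal{M}$ is standard bit mutation: $\mathcal{M}(x)$ flips each bit of $x$ independently with probability $1/n$. Potential function: $\tau=\frac{4e}{\varepsilon}$, $\alpha=1-\frac1\tau\ln\big(1+\frac1\tau\big)$ (which lies in $(\tfrac34,1)$), $f_0=\lceil\alpha n\rceil$, and $g:\{0,1\}^n\to\mathbb{R}$ is $g(x)=\tau^{f(x)-f_0}$ if $f(x)\ge f_0$ and $g(x)=0$ otherwise. *)

theory Defs
  imports Complex_Main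
begin

text \<open>Bit strings of length n are represented as bool lists of length n.\<close>

definition onemax :: "bool list \<Rightarrow> nat" where
  "onemax x = length (filter id x)"

definition tau :: "real \<Rightarrow> real" where
  "tau eps = 4 * exp 1 / eps"

definition alpha :: "real \<Rightarrow> real" where
  "alpha eps = 1 - (1 / tau eps) * ln (1 + 1 / tau eps)"

definition f0 :: "real \<Rightarrow> nat \<Rightarrow> int" where
  "f0 eps n = \<lceil>alpha eps * real n\<rceil>"

definition pot :: "real \<Rightarrow> nat \<Rightarrow> bool list \<Rightarrow> real" where
  "pot eps n x = (if int (onemax x) \<ge> f0 eps n
                   then tau eps ^ nat (int (onemax x) - f0 eps n) else 0)"

definition mut_prob :: "nat \<Rightarrow> bool list \<Rightarrow> bool list \<Rightarrow> real" where
  "mut_prob n x y = (\<Prod>i<n. if x ! i = y ! i then 1 - 1 / real n else 1 / real n)"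

text \<open>Expectation of h(M(x)) for standard bit mutation M.\<close>
definition mut_expect :: "nat \<Rightarrow> (bool list \<Rightarrow> real) \<Rightarrow> bool list \<Rightarrow> real" where
  "mut_expect n h x = (\<Sum>y\<in>{y. length y = n}. mut_prob n x y * h y)"

end

theory Submission
  imports Defs
begin

lemma sum_prod_lists:
  fixes h :: "nat \<Rightarrow> bool \<Rightarrow> real"
  shows "(\<Sum>y\<in>{y::bool list. length y = n}. \<Prod>i<n. h i (y!i)) = (\<Prod>i<n. h i True + h i False)"
proof (induction n arbitrary: h)
  case 0
  then show ?case by simp
next
  case (Suc n)
  have S: "{y::bool list. length y = Suc n} = (\<lambda>(b,ys). b # ys) ` (UNIV \<times> {ys. length ys = n})"
    by (auto simp: length_Suc_conv image_iff)
  have inj: "inj_on (\<lambda>(b,ys). b # ys) (UNIV \<times> {ys::bool list. length ys = n})"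
    by (auto simp: inj_on_def)
  have fin: "finite {ys::bool list. length ys = n}"
    using finite_lists_length_eq[of "UNIV::bool set" n] by simp
  have "(\<Sum>y\<in>{y::bool list. length y = Suc n}. \<Prod>i<Suc n. h i (y!i))
     = (\<Sum>(b,ys)\<in>UNIV \<times> {ys::bool list. length ys = n}. h 0 b * (\<Prod>i<n. h (Suc i) (ys ! i)))"
    unfolding S by (subst sum.reindex[OF inj]) (auto simp: prod.lessThan_Suc_shift simp del: prod.lessThan_Suc intro!: sum.cong)
  also have "\<dots> = (\<Sum>b\<in>UNIV. \<Sum>ys\<in>{ys::bool list. length ys = n}. h 0 b * (\<Prod>i<n. h (Suc i) (ys ! i)))"
    by (subst sum.cartesian_product) simp
  also have "\<dots> = (\<Sum>b\<in>UNIV. h 0 b * (\<Prod>i<n. h (Suc i) True + h (Suc i) False))"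
    proof (rule sum.cong[OF refl])
    fix b show "(\<Sum>ys | length ys = n. h 0 b * (\<Prod>i<n. h (Suc i) (ys ! i))) = h 0 b * (\<Prod>i<n. h (Suc i) True + h (Suc i) False)"
      using Suc.IH[of "\<lambda>i. h (Suc i)"] by (simp add: sum_distrib_left[symmetric])
  qed
  also have "\<dots> = (\<Prod>i<Suc n. h i True + h i False)"
    by (simp add: UNIV_bool prod.lessThan_Suc_shift algebra_simps del: prod.lessThan_Suc)
  finally show ?case .
qed

lemma pow_onemax: "(t::real) ^ onemax y = (\<Prod>i<length y. if y!i then t else 1)"
  by (induction y) (auto simp: onemax_def prod.lessThan_Suc_shift simp del: prod.lessThan_Suc)

lemma prod_AB: "(\<Prod>i<length x. if x!i then (A::real) else B) = A ^ onemax x * B ^ (length x - onemax x)"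
proof (induction x)
  case Nil then show ?case by (simp add: onemax_def)
next
  case (Cons a x)
  have le: "length (filter id x) \<le> length x" by simp
  show ?case using Cons le
    by (auto simp: onemax_def prod.lessThan_Suc_shift Suc_diff_le[OF le] simp del: prod.lessThan_Suc)
qed
lemma analytic:
  fixes eps t :: real and n k :: nat
  assumes eps: "0 < eps" "eps < 1" and t: "t = 4 * exp 1 / eps" and n: "n \<ge> 1" and kn: "k \<le> n"
    and kal: "real k \<ge> (1 - (1/t) * ln (1 + 1/t)) * real n"
  shows "((1-1/n)*t+1/n)^k * (t/n + (1-1/n))^(n-k) \<le> (1/exp 1)*(1+eps)*t^k"
proof -
  define u where "u = 1/t"
  define L where "L = ln (1 + u)"
  have e1: "exp 1 > (1::real)" by simp
  have t1: "t > 4"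
  proof -
    have "4 * exp 1 * eps < 4 * exp 1 * 1" using eps by (intro mult_strict_left_mono) auto
    then have "4 * exp 1 < 4 * exp 1 / eps" using eps by (simp add: field_simps)
    moreover have "4 < 4 * exp (1::real)" using e1 by simp
    ultimately show ?thesis using t by linarith
  qed
  have u0: "0 < u" "u < 1/4" using t1 by (auto simp: u_def field_simps)
  have L0: "0 \<le> L" "L \<le> u" using u0 by (auto simp: L_def ln_add_one_self_le_self)
  have nr: "real n \<ge> 1" using n by simp
  define q where "q = real k / real n"
  have q: "q \<ge> 1 - u * L" "q \<le> 1" using kal kn nr
    by (auto simp: q_def u_def L_def field_simps)
  have A: "(1-1/n)*t+1/n = t * (1 - (1-u)/n)" using t1 nr by (simp add: u_def field_simps)
  have c0: "0 \<le> 1 - (1-u)/n" using u0 nr by (simp add: field_simps)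
  have c1: "1 - (1-u)/n \<le> exp ((u-1)/n)"
  proof -
    have "1 - (1-u)/n = 1 + (u-1)/n" by (simp add: diff_divide_distrib)
    moreover have "1 + (u-1)/n \<le> exp ((u-1)/n)" by (rule exp_ge_add_one_self)
    ultimately show ?thesis by linarith
  qed
  have ck: "(1 - (1-u)/n)^k \<le> exp (real k * ((u-1)/n))"
    unfolding exp_of_nat_mult by (rule power_mono[OF c1 c0])
  have B0: "0 \<le> t/n + (1-1/n)" using t1 nr by (simp add: field_simps)
  have B1: "t/n + (1-1/n) \<le> exp ((t-1)/n)"
  proof -
    have "t/n + (1-1/n) = 1 + (t-1)/n" by (simp add: diff_divide_distrib)
    moreover have "1 + (t-1)/n \<le> exp ((t-1)/n)" by (rule exp_ge_add_one_self)
    ultimately show ?thesis by linarith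
  qed
  have Bk: "(t/n + (1-1/n))^(n-k) \<le> exp (real (n-k) * ((t-1)/n))"
    unfolding exp_of_nat_mult by (rule power_mono[OF B1 B0])
  have E: "real k * ((u-1)/n) + real (n-k) * ((t-1)/n) = (t-1) - (t-u)*q"
    using kn nr by (simp add: q_def of_nat_diff field_simps)
  have tu: "t * u = 1" using t1 by (simp add: u_def)
  have "(t-1) - (t-u)*q \<le> (t-1) - (t-u)*(1-u*L)"
    using q(1) u0 t1 by (intro diff_left_mono mult_left_mono) auto
  also have "\<dots> = u - 1 + (1 - u*u)*L" using tu by (simp add: algebra_simps)
  also have "\<dots> \<le> 2*u - 1" 
  proof -
    have "0 \<le> L*(u*u)" using L0 u0 by simp
    moreover have "u - 1 + (1 - u*u)*L = u - 1 + L - L*(u*u)" by (simp add: algebra_simps)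
    ultimately show ?thesis using L0 by linarith
  qed
  also have "\<dots> \<le> ln (1+eps) - 1"
  proof -
    have "2*u = eps / (2 * exp 1)" using t by (simp add: u_def)
    also have "\<dots> \<le> eps / 2" using eps e1 by (simp add: field_simps)
    also have "\<dots> \<le> eps / (1+eps)" using eps by (simp add: field_simps)
    also have "\<dots> \<le> ln (1+eps)"
    proof -
      have "ln (1/(1+eps)) \<le> 1/(1+eps) - 1" using eps by (intro ln_le_minus_one) auto
      then show ?thesis using eps by (simp add: ln_div field_simps)
    qed
    finally show ?thesis by simp
  qed
  finally have Ele: "real k * ((u-1)/n) + real (n-k) * ((t-1)/n) \<le> ln (1+eps) - 1" using E by simp
  have "((1-1/n)*t+1/n)^k * (t/n + (1-1/n))^(n-k) = t^k * ((1 - (1-u)/n)^k * (t/n + (1-1/n))^(n-k))"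
    unfolding A power_mult_distrib by simp
  also have "\<dots> \<le> t^k * (exp (real k * ((u-1)/n)) * exp (real (n-k) * ((t-1)/n)))"
    using t1 ck Bk c0 B0 by (intro mult_left_mono mult_mono) auto
  also have "\<dots> = t^k * exp (real k * ((u-1)/n) + real (n-k) * ((t-1)/n))" by (simp add: exp_add)
  also have "\<dots> \<le> t^k * exp (ln (1+eps) - 1)" using Ele t1 by (intro mult_left_mono) auto
  also have "\<dots> = (1/exp 1)*(1+eps)*t^k" using eps by (simp add: exp_diff field_simps)
  finally show ?thesis .
qed

theorem theorem4:
  fixes eps :: real and n :: nat and x :: "bool list"
  assumes "0 < eps" "eps < 1" "n \<ge> 1" "length x = n"
    and "int (onemax x) \<ge> f0 eps n"
  shows "mut_expect n (pot eps n) x \<le> (1 / exp 1) * (1 + eps) * pot eps n x"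
proof -
  define t where "t = tau eps"
  define F where "F = nat (f0 eps n)"
  define k where "k = onemax x"
  define A where "A = (1-1/n)*t+1/n"
  define B where "B = t/n + (1-1/n)"
  have e1: "exp 1 > (1::real)" by simp
  have t0: "t > 0" using assms(1) by (simp add: t_def tau_def)
  have nr: "real n \<ge> 1" using assms(3) by simp
  have L: "ln (1 + 1/t) \<le> 1/t" using t0 by (intro ln_add_one_self_le_self) auto
  have "ln (1 + 1/t) \<ge> 0" using t0 by simp
  have "1/t < 1"
  proof -
    have "4 * exp 1 * eps < 4 * exp 1 * 1" using assms by (intro mult_strict_left_mono) auto
    then have "4 * exp 1 < t" using assms by (simp add: t_def tau_def field_simps)
    then have "1 < t" using e1 by linarith
    then show ?thesis using t0 by (simp add: field_simps)
  qed
  have "(1/t) * ln (1 + 1/t) \<le> 1"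
    using L \<open>1/t < 1\<close> \<open>ln (1 + 1/t) \<ge> 0\<close> t0
    by (intro mult_le_one) (auto intro: order.trans[OF L] less_imp_le)
  then have al0: "alpha eps \<ge> 0" by (simp add: alpha_def t_def)
  have f0n: "f0 eps n \<ge> 0"
  proof -
    have "0 \<le> alpha eps * real n" using al0 by simp
    then show ?thesis unfolding f0_def by linarith
  qed
  have Fk: "F \<le> k" using assms(5) f0n by (simp add: F_def k_def)
  have kn: "k \<le> n" using assms(4) length_filter_le[of id x] by (simp add: k_def onemax_def)
  have kal: "real k \<ge> (1 - (1/t) * ln (1 + 1/t)) * real n"
  proof -
    have "alpha eps * real n \<le> of_int (f0 eps n)" unfolding f0_def by (rule le_of_int_ceiling)
    also have "\<dots> \<le> real k" using assms(5) by (simp add: k_def)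
    finally show ?thesis by (simp add: alpha_def t_def)
  qed
  have potx: "pot eps n x = t^k / t^F"
  proof -
    have "pot eps n x = t ^ (k - F)" using assms(5) f0n by (simp add: pot_def t_def k_def F_def nat_diff_distrib)
    also have "\<dots> = t^k / t^F" using Fk t0 by (simp add: power_diff)
    finally show ?thesis .
  qed
  have potle: "pot eps n y \<le> t ^ onemax y / t^F" for y
  proof (cases "int (onemax y) \<ge> f0 eps n")
    case True
    then have Fy: "F \<le> onemax y" by (simp add: F_def)
    have "nat (int (onemax y) - f0 eps n) = onemax y - F" using f0n True by (simp add: F_def)
    then have "pot eps n y = t ^ (onemax y - F)" using True by (simp add: pot_def t_def)
    also have "\<dots> = t ^ onemax y / t^F" using Fy t0 by (simp add: power_diff)
    finally show ?thesis by simp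
  next
    case False then show ?thesis using t0 by (simp add: pot_def)
  qed
  define h where "h i b = (if x!i = b then 1-1/real n else 1/real n) * (if b then t else 1)" for i b
  have mp0: "mut_prob n x y \<ge> 0" for y
    unfolding mut_prob_def using nr by (intro prod_nonneg) (auto simp: field_simps)
  have mh: "mut_prob n x y * t ^ onemax y = (\<Prod>i<n. h i (y!i))" if "length y = n" for y
    unfolding mut_prob_def pow_onemax h_def using that by (simp add: prod.distrib)
  have fin: "finite {y::bool list. length y = n}"
    using finite_lists_length_eq[of "UNIV::bool set" n] by simp
  have "mut_expect n (pot eps n) x \<le> (\<Sum>y\<in>{y. length y = n}. mut_prob n x y * (t ^ onemax y / t^F))"
    unfolding mut_expect_def using mp0 potle by (intro sum_mono mult_left_mono) auto
  also have "\<dots> = (\<Sum>y\<in>{y. length y = n}. \<Prod>i<n. h i (y!i)) / t^F"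
    by (simp add: sum_divide_distrib mh)
  also have "(\<Sum>y\<in>{y. length y = n}. \<Prod>i<n. h i (y!i)) = (\<Prod>i<n. if x!i then A else B)"
    unfolding sum_prod_lists by (intro prod.cong) (auto simp: h_def A_def B_def algebra_simps)
  also have "\<dots> = A^k * B^(n-k)" using prod_AB[of x A B] assms(4) by (simp add: k_def)
  also have "A^k * B^(n-k) \<le> (1/exp 1)*(1+eps)*t^k"
    unfolding A_def B_def using analytic[OF assms(1,2) _ assms(3) kn kal] by (simp add: t_def tau_def)
  finally show ?thesis using t0 by (simp add: potx divide_right_mono)
qed

end
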